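(* Let $p$ be a positive integer, $L,E,\sigma>0$ with $L,E\in 2^{-p}\mathbb{Z}$, and $\epsilon>0$ with $\sigma\ge\max\left(\frac{2}{\epsilon},2^{-p}\right)$. Then the truncated cumulative Laplace mechanism $\mathcal{M}^{(\mathtt{CLap})}_{L,E,\sigma,p}$ satisfies $d_\chi$-privacy with respect to the $\ell_1$ distance: for all $x,x'\in\mathcal{A}_{p,E}$ and all $z\in\mathcal{B}_{p,L+E}$, \[ f^{(\mathtt{CLap})}_{x,\sigma}(z)\le e^{\epsilon|x-x'|}f^{(\mathtt{CLap})}_{x',\sigma}(z). \]
   Context: For $p\in\mathbb{Z}_{>0}$ and $B>0$, $2^{-p}\mathbb{Z}=\{a/2^p: a\in\mathbb{Z}\}$, $\mathcal{A}_{p,B}:=[-B,B]\cap 2^{-p}\mathbb{Z}$ and $\mathcal{B}_{p,B}:=\mathcal{A}_{p,B}\setminus\{B\}$. The truncated cumulative Laplace mechanism $\mathcal{M}^{(\mathtt{CLap})}_{L,E,\sigma,p}$ with parameters $L,E,\sigma>0$ maps $x\in\mathcal{A}_{p,E}$ to $y\in\mathcal{B}_{p,L+E}$ with probability $f^{(\mathtt{CLap})}_{x,\sigma}(y)=\frac{1}{\lambda^{(\mathtt{CLap})}_{L,E,\sigma}}\int_y^{y+2^{-p}}e^{-\min(|r-x|,L)/\sigma}dr$, where $\lambda^{(\mathtt{CLap})}_{L,E,\sigma}=\sum_{y\in\mathcal{B}_{p,L+E}}\int_y^{y+2^{-p}}e^{-\min(|r-x|,L)/\sigma}dr$ is the normalizing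 constant (independent of $x$). *)

theory Defs
  imports "HOL-Analysis.Analysis"
begin

definition dyadic :: "nat \<Rightarrow> real set" where
  "dyadic p = {y. \<exists>a::int. y = of_int a / 2 ^ p}"

definition grid_A :: "nat \<Rightarrow> real \<Rightarrow> real set" where
  "grid_A p B = {-B..B} \<inter> dyadic p"

definition grid_B :: "nat \<Rightarrow> real \<Rightarrow> real set" where
  "grid_B p B = grid_A p B - {B}"

definition clap_mass :: "real \<Rightarrow> real \<Rightarrow> nat \<Rightarrow> real \<Rightarrow> real \<Rightarrow> real" where
  "clap_mass L \<sigma> p x y = integral {y..y + 1 / 2 ^ p} (\<lambda>r. exp (- min \<bar>r - x\<bar> L / \<sigma>))"

definition clap_lambda :: "real \<Rightarrow> real \<Rightarrow> real \<Rightarrow> nat \<Rightarrow> real \<Rightarrow> real" where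
  "clap_lambda L E \<sigma> p x = (\<Sum>y\<in>grid_B p (L + E). clap_mass L \<sigma> p x y)"

definition clap_prob :: "real \<Rightarrow> real \<Rightarrow> real \<Rightarrow> nat \<Rightarrow> real \<Rightarrow> real \<Rightarrow> real" where
  "clap_prob L E \<sigma> p x y = clap_mass L \<sigma> p x y / clap_lambda L E \<sigma> p x"

end

theory Submission
  imports Defs
begin

lemma cont_dens: "continuous_on S (\<lambda>r::real. exp (- min \<bar>r - x\<bar> L / \<sigma>))"
  unfolding divide_inverse by (intro continuous_intros)

lemma integ_dens: "(\<lambda>r::real. exp (- min \<bar>r - x\<bar> L / \<sigma>)) integrable_on {a..b}"
  by (rule integrable_continuous_interval[OF cont_dens])

lemma pw:
  fixes r x x' L \<sigma> :: real
  assumes "\<sigma> > 0"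
  shows "exp (- min \<bar>r - x\<bar> L / \<sigma>) \<le> exp (\<bar>x - x'\<bar> / \<sigma>) * exp (- min \<bar>r - x'\<bar> L / \<sigma>)"
proof -
  have "min \<bar>r - x'\<bar> L - min \<bar>r - x\<bar> L \<le> \<bar>x - x'\<bar>" 
  proof -
    have "\<bar>r - x'\<bar> \<le> \<bar>r - x\<bar> + \<bar>x - x'\<bar>"
      using abs_triangle_ineq[of "r - x" "x - x'"] by simp
    then show ?thesis unfolding min_def by auto
  qed
  then have "- min \<bar>r - x\<bar> L / \<sigma> \<le> \<bar>x - x'\<bar> / \<sigma> + - min \<bar>r - x'\<bar> L / \<sigma>"
    using assms by (simp add: field_simps)
  then show ?thesis by (simp add: exp_add[symmetric])
qed

lemma mass_nonneg: "0 \<le> clap_mass L \<sigma> p x y"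
  unfolding clap_mass_def by (rule integral_nonneg[OF integ_dens]) simp

lemma mass_le:
  assumes "\<sigma> > 0"
  shows "clap_mass L \<sigma> p x y \<le> exp (\<bar>x - x'\<bar> / \<sigma>) * clap_mass L \<sigma> p x' y"
  unfolding clap_mass_def
  apply (subst integral_mult[OF integ_dens])
  apply (rule integral_le[OF integ_dens])
   apply (subst integrable_on_cmult_iff, simp, rule integ_dens)
  using pw[OF assms] by blast

lemma lambda_le:
  assumes "\<sigma> > 0"
  shows "clap_lambda L E \<sigma> p x \<le> exp (\<bar>x - x'\<bar> / \<sigma>) * clap_lambda L E \<sigma> p x' "
  unfolding clap_lambda_def sum_distrib_left
  by (rule sum_mono) (rule mass_le[OF assms])

lemma lambda_nonneg: "0 \<le> clap_lambda L E \<sigma> p x"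
  unfolding clap_lambda_def by (rule sum_nonneg) (rule mass_nonneg)

theorem mainTheorem10:
  fixes p :: nat and L E \<sigma> \<epsilon> :: real
  assumes "p > 0" and "L > 0" and "E > 0" and "\<sigma> > 0"
    and "L \<in> dyadic p" and "E \<in> dyadic p"
    and "\<epsilon> > 0" and "\<sigma> \<ge> max (2 / \<epsilon>) (1 / 2 ^ p)"
  shows "\<forall>x \<in> grid_A p E. \<forall>x' \<in> grid_A p E. \<forall>z \<in> grid_B p (L + E).
           clap_prob L E \<sigma> p x z \<le> exp (\<epsilon> * \<bar>x - x'\<bar>) * clap_prob L E \<sigma> p x' z"
proof (intro ballI)
  fix x x' z
  define K where "K = exp (\<bar>x - x'\<bar> / \<sigma>)"
  define lx where "lx = clap_lambda L E \<sigma> p x"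
  define lx' where "lx' = clap_lambda L E \<sigma> p x'"
  define mx where "mx = clap_mass L \<sigma> p x z"
  define mx' where "mx' = clap_mass L \<sigma> p x' z"
  have K: "K > 0" unfolding K_def by simp
  have m: "mx \<le> K * mx'" unfolding mx_def mx'_def K_def by (rule mass_le[OF assms(4)])
  have l1: "lx \<le> K * lx'" unfolding lx_def lx'_def K_def by (rule lambda_le[OF assms(4)])
  have l2: "lx' \<le> K * lx" unfolding lx_def lx'_def K_def
    using lambda_le[OF assms(4), of L E p x' x] by (simp add: abs_minus_commute)
  have mn: "0 \<le> mx'" "0 \<le> mx" unfolding mx'_def mx_def by (rule mass_nonneg)+
  have ln: "0 \<le> lx" "0 \<le> lx'" unfolding lx'_def lx_def by (rule lambda_nonneg)+
  have eps: "2 / \<sigma> \<le> \<epsilon>"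
    using assms(4,7,8) by (simp add: field_simps)
  have KK: "K * K \<le> exp (\<epsilon> * \<bar>x - x'\<bar>)"
  proof -
    have "K * K = exp (2 / \<sigma> * \<bar>x - x'\<bar>)" unfolding K_def by (simp add: exp_add[symmetric])
    also have "\<dots> \<le> exp (\<epsilon> * \<bar>x - x'\<bar>)" using eps by (simp add: mult_right_mono del: times_divide_eq_left)
    finally show ?thesis .
  qed
  have main: "mx / lx \<le> (K * K) * (mx' / lx')"
  proof (cases "lx = 0")
    case True then show ?thesis using K mn ln by simp
  next
    case False
    then have lxp: "lx > 0" using ln by simp
    then have lxp': "lx' > 0" using l1 K
      by (smt (verit) mult_nonneg_nonneg ln(2) mult_le_0_iff)
    have "mx / lx \<le> K * mx' / lx" using m lxp by (simp add: divide_right_mono)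
    also have "\<dots> \<le> K * mx' * K / lx'"
    proof -
      have "K * mx' / lx = K * mx' * K / (K * lx)" using K by simp
      also have "\<dots> \<le> K * mx' * K / lx'"
        by (rule divide_left_mono) (use l2 K mn lxp' in auto)
      finally show ?thesis .
    qed
    finally show ?thesis by (simp add: field_simps)
  qed
  have "mx / lx \<le> exp (\<epsilon> * \<bar>x - x'\<bar>) * (mx' / lx')"
    using main KK mn ln by (smt (verit) divide_nonneg_nonneg mult_right_mono)
  then show "clap_prob L E \<sigma> p x z \<le> exp (\<epsilon> * \<bar>x - x'\<bar>) * clap_prob L E \<sigma> p x' z"
    unfolding clap_prob_def mx_def mx'_def lx_def lx'_def by simp
qed

end
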